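(* Every almost reciprocal Puiseux monoid has unique atomic decomposition.
   Context: A Puiseux monoid is an additive submonoid of $(\mathbb{Q}_{\ge 0},+)$. For a positive rational $r = n/d$ in lowest terms, $\mathsf{d}(r) := d$. An almost reciprocal Puiseux monoid is a monoid of the form $\langle \frac{c_n}{d_n} \mid n \in \mathbb{N} \rangle$, where $(d_n)_{n\ge 1}$ is a strictly increasing sequence of positive integers whose terms are pairwise relatively prime, and $(c_n)_{n \ge 1}$ is a sequence of positive integers with $\gcd(c_n,d_n)=1$ for every $n$. An atom of $M$ is a nonzero element $a$ such that $a=x+y$ with $x,y\in M$ forces $x=0$ or $y=0$; $M$ is atomic if each element is a finite sum of atoms (almost reciprocal Puiseux monoids are atomic). Let $M$ be an atomic Puiseux monoid with set of atoms $\mathcal{A}(M) = \{a_n \mid n \in \mathbb{N}\}$. For $x \in M$, an atomic decomposition of $x$ is an expression $x = N + \sum_{i \in \mathbb{N}} c_i a_i$ (equality in $\mathbb{Q}$) with $N \in \mathbb{N}_0$ and $c_i \in \{0,1,\dots,\mathsf{d}(a_i)-1\}$ for every $i$, only finitely many $c_i$ nonzero. $M$ has unique atomic decomposition if every element of $M$ has exactly one atomic decomposition. *)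

theory Defs
  imports Complex_Main "HOL-Computational_Algebra.Primes"
begin

definition den :: "rat \<Rightarrow> nat" where
  "den r = nat (snd (quotient_of r))"

definition puiseux_monoid :: "rat set \<Rightarrow> bool" where
  "puiseux_monoid M \<longleftrightarrow> 0 \<in> M \<and> (\<forall>x\<in>M. 0 \<le> x) \<and> (\<forall>x\<in>M. \<forall>y\<in>M. x + y \<in> M)"

inductive_set gen_monoid :: "rat set \<Rightarrow> rat set" for S :: "rat set" where
  zero: "0 \<in> gen_monoid S"
| step: "x \<in> gen_monoid S \<Longrightarrow> s \<in> S \<Longrightarrow> x + s \<in> gen_monoid S"

definition is_atom :: "rat set \<Rightarrow> rat \<Rightarrow> bool" where
  "is_atom M a \<longleftrightarrow> a \<in> M \<and> a \<noteq> 0 \<and>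
     (\<forall>x\<in>M. \<forall>y\<in>M. a = x + y \<longrightarrow> x = 0 \<or> y = 0)"

text \<open>Almost reciprocal Puiseux monoid (indices start at 0 instead of 1).\<close>
definition almost_reciprocal :: "rat set \<Rightarrow> bool" where
  "almost_reciprocal M \<longleftrightarrow>
     (\<exists>c d :: nat \<Rightarrow> nat.
        strict_mono d \<and> (\<forall>n. 0 < d n) \<and>
        (\<forall>m n. m \<noteq> n \<longrightarrow> coprime (d m) (d n)) \<and>
        (\<forall>n. 0 < c n \<and> coprime (c n) (d n)) \<and>
        M = gen_monoid (range (\<lambda>n. of_nat (c n) / of_nat (d n))))"

definition atomic_decomposition :: "rat set \<Rightarrow> rat \<Rightarrow> nat \<Rightarrow> (rat \<Rightarrow> nat) \<Rightarrow> bool" where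
  "atomic_decomposition M x N c \<longleftrightarrow>
     finite {a. c a \<noteq> 0} \<and>
     (\<forall>a. c a \<noteq> 0 \<longrightarrow> is_atom M a) \<and>
     (\<forall>a. is_atom M a \<longrightarrow> c a < den a) \<and>
     x = of_nat N + (\<Sum>a\<in>{a. c a \<noteq> 0}. of_nat (c a) * a)"

definition unique_atomic_decomposition :: "rat set \<Rightarrow> bool" where
  "unique_atomic_decomposition M \<longleftrightarrow>
     (\<forall>x\<in>M. \<exists>!p. atomic_decomposition M x (fst p) (snd p))"

end

theory Submission
  imports Defs
begin

definition cpd :: "int \<Rightarrow> rat \<Rightarrow> bool" where
  "cpd q x \<longleftrightarrow> (\<exists>k::int. k > 0 \<and> coprime k q \<and> of_int k * x \<in> \<int>)"

lemma cpd_int: "x \<in> \<int> \<Longrightarrow> cpd q x"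
  unfolding cpd_def by (rule exI[of _ 1]) simp

lemma cpd_add:
  assumes "cpd q x" "cpd q y" shows "cpd q (x + y)"
proof -
  obtain k1 where k1: "k1 > 0" "coprime k1 q" "of_int k1 * x \<in> \<int>" using assms(1) cpd_def by blast
  obtain k2 where k2: "k2 > 0" "coprime k2 q" "of_int k2 * y \<in> \<int>" using assms(2) cpd_def by blast
  have "of_int (k1*k2) * (x + y) = of_int k2 * (of_int k1 * x) + of_int k1 * (of_int k2 * y)"
    by (simp add: algebra_simps)
  also have "\<dots> \<in> \<int>" using k1 k2 by (meson Ints_add Ints_mult Ints_of_int)
  finally show ?thesis unfolding cpd_def using k1 k2
    by (intro exI[of _ "k1*k2"]) simp
qed

lemma cpd_mult_int:
  assumes "cpd q x" shows "cpd q (of_int e * x)"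
proof -
  obtain k where k: "k > 0" "coprime k q" "of_int k * x \<in> \<int>" using assms cpd_def by blast
  have "of_int k * (of_int e * x) = of_int e * (of_int k * x)" by simp
  also have "\<dots> \<in> \<int>" using k by (meson Ints_mult Ints_of_int)
  finally show ?thesis unfolding cpd_def using k by blast
qed

lemma cpd_sum:
  assumes "finite S" "\<And>a. a \<in> S \<Longrightarrow> cpd q (f a)" shows "cpd q (sum f S)"
  using assms by (induction S rule: finite_induct) (auto intro: cpd_int cpd_add)

lemma cpd_gen:
  assumes "0 < D" "coprime (int D) q" shows "cpd q (of_nat C / of_nat D)"
  unfolding cpd_def using assms
  by (intro exI[of _ "int D"]) simp

lemma cpd_dvd:
  assumes "0 < D" "coprime C D" "cpd (int D) (of_int e * (of_nat C / of_nat D))"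
  shows "int D dvd e"
proof -
  obtain k where k: "k > 0" "coprime k (int D)" "of_int k * (of_int e * (of_nat C / of_nat D :: rat)) \<in> \<int>"
    using assms(3) cpd_def by blast
  then obtain t where t: "of_int k * (of_int e * (of_nat C / of_nat D)) = (of_int t :: rat)"
    by (auto elim: Ints_cases)
  then have "(of_int (k * e * int C) :: rat) = of_int (t * int D)"
    using assms(1) by (simp add: field_simps)
  then have "k * e * int C = t * int D" by (simp only: of_int_eq_iff)
  then have "int D dvd k * (e * int C)" by (metis dvd_triv_right mult.assoc)
  then have "int D dvd e * int C" using k(2)
    by (simp add: coprime_commute coprime_dvd_mult_right_iff)
  then show ?thesis using assms(2)
    by (metis coprime_commute coprime_dvd_mult_left_iff coprime_int_iff)
qed

lemma sum_supp:
  assumes "finite S" "{a. cf a \<noteq> 0} \<subseteq> S"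
  shows "(\<Sum>a\<in>{a. cf a \<noteq> 0}. of_nat (cf a) * (a::rat)) = (\<Sum>a\<in>S. of_nat (cf a) * a)"
  using assms by (intro sum.mono_neutral_left) auto

locale ar =
  fixes c d :: "nat \<Rightarrow> nat"
  assumes dpos: "\<And>n. 0 < d n"
    and cop: "\<And>m n. m \<noteq> n \<Longrightarrow> coprime (d m) (d n)"
    and cpos: "\<And>n. 0 < c n"
    and ccop: "\<And>n. coprime (c n) (d n)"
begin

definition g :: "nat \<Rightarrow> rat" where "g n = of_nat (c n) / of_nat (d n)"

abbreviation MM where "MM \<equiv> gen_monoid (range g)"

lemma g_pos: "0 < g n"
  unfolding g_def using dpos[of n] cpos[of n] by simp

lemma den_g: "den (g n) = d n"
proof -
  have "g n = Fract (int (c n)) (int (d n))"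
    unfolding g_def by (simp add: Fract_of_int_quotient)
  then have "quotient_of (g n) = (int (c n), int (d n))"
    using dpos[of n] ccop[of n] by (simp add: quotient_of_Fract)
  then show ?thesis unfolding den_def by simp
qed

lemma g_mult: "of_nat (d n) * g n = of_nat (c n)"
  unfolding g_def using dpos[of n] by simp

lemma M_nonneg: "x \<in> MM \<Longrightarrow> 0 \<le> x"
proof (induction rule: gen_monoid.induct)
  case zero then show ?case by simp
next
  case (step x s) then show ?case using g_pos by (auto intro: add_nonneg_nonneg less_imp_le)
qed

lemma g_in: "g n \<in> MM"
  using gen_monoid.step[OF gen_monoid.zero, of "g n" "range g"] by simp

lemma atom_in: assumes "is_atom MM a" shows "\<exists>n. a = g n"
proof -
  have a: "a \<in> MM" "a \<noteq> 0" using assms unfolding is_atom_def by auto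
  from a show ?thesis
  proof (cases rule: gen_monoid.cases)
    case (step x s)
    then obtain n where s: "s = g n" by auto
    have "x = 0 \<or> s = 0" using assms step g_in s unfolding is_atom_def by blast
    then show ?thesis using g_pos[of n] s step by auto
  qed simp
qed

lemma split: "y \<in> MM \<Longrightarrow> \<exists>k::nat. \<exists>w. y = of_nat k * g m + w \<and> 0 \<le> w \<and> cpd (int (d m)) w"
proof (induction rule: gen_monoid.induct)
  case zero
  show ?case by (rule exI[of _ 0], rule exI[of _ 0]) (simp add: cpd_int)
next
  case (step x s)
  then obtain k w where kw: "x = of_nat k * g m + w" "0 \<le> w" "cpd (int (d m)) w" by blast
  obtain n where s: "s = g n" using step by auto
  show ?case
  proof (cases "n = m")
    case True
    then show ?thesis using kw s
      by (intro exI[of _ "Suc k"] exI[of _ w]) (simp add: algebra_simps)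
  next
    case False
    have "cpd (int (d m)) (g n)" unfolding g_def
      by (rule cpd_gen) (use dpos cop[OF False] in simp_all)
    then show ?thesis using kw s g_pos[of n]
      by (intro exI[of _ k] exI[of _ "w + g n"]) (auto intro: cpd_add simp: algebra_simps)
  qed
qed

lemma gen_atom: assumes "1 < d m" shows "is_atom MM (g m)"
  unfolding is_atom_def
proof (intro conjI ballI impI)
  show "g m \<in> MM" by (rule g_in)
  show "g m \<noteq> 0" using g_pos[of m] by simp
  fix y z assume yz: "y \<in> MM" "z \<in> MM" "g m = y + z"
  obtain k1 w1 where 1: "y = of_nat k1 * g m + w1" "0 \<le> w1" "cpd (int (d m)) w1"
    using split[OF yz(1)] by blast
  obtain k2 w2 where 2: "z = of_nat k2 * g m + w2" "0 \<le> w2" "cpd (int (d m)) w2"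
    using split[OF yz(2)] by blast
  define e where "e = 1 - int k1 - int k2"
  have eq: "of_int e * g m = w1 + w2" using yz(3) 1 2 unfolding e_def
    by (simp add: algebra_simps)
  have "cpd (int (d m)) (of_int e * (of_nat (c m) / of_nat (d m)))"
    using eq cpd_add[OF 1(3) 2(3)] unfolding g_def by simp
  then have dv: "int (d m) dvd e" using cpd_dvd dpos ccop by blast
  have gp: "0 < g m" by (rule g_pos)
  show "y = 0 \<or> z = 0"
  proof (cases "k1 + k2")
    case 0
    then have "e = 1" unfolding e_def by simp
    then show ?thesis using dv assms by simp
  next
    case (Suc j)
    show ?thesis
    proof (cases j)
      case 0
      then have "e = 0" using Suc unfolding e_def by simp
      then have "w1 = 0" "w2 = 0" using eq 1(2) 2(2) by auto
      then show ?thesis using 1 2 Suc 0 by (cases k1) auto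
    next
      case (Suc i)
      then have "of_nat (k1 + k2) * g m \<ge> 2 * g m"
        using `k1 + k2 = Suc j` gp by (intro mult_right_mono) auto
      moreover have "g m = of_nat (k1+k2) * g m + (w1 + w2)" using yz(3) 1 2
        by (simp add: algebra_simps)
      ultimately have False using gp 1(2) 2(2) by linarith
      then show ?thesis ..
    qed
  qed
qed


lemma existence: "x \<in> MM \<Longrightarrow> \<exists>N cf. atomic_decomposition MM x N cf"
proof (induction rule: gen_monoid.induct)
  case zero
  show ?case unfolding atomic_decomposition_def
    by (rule exI[of _ 0], rule exI[of _ "\<lambda>_. 0"]) (simp add: den_def quotient_of_denom_pos')
next
  case (step x s)
  then obtain N cf where dec: "atomic_decomposition MM x N cf" by blast
  obtain m where s: "s = g m" using step by auto
  define S where "S = {a. cf a \<noteq> 0}"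
  have fS: "finite S" and Sat: "\<And>a. cf a \<noteq> 0 \<Longrightarrow> is_atom MM a"
    and bnd: "\<And>a. is_atom MM a \<Longrightarrow> cf a < den a"
    and xeq: "x = of_nat N + (\<Sum>a\<in>S. of_nat (cf a) * a)"
    using dec unfolding atomic_decomposition_def S_def by auto
  define b where "b = g m"
  define T where "T = insert b S"
  have fT: "finite T" using fS unfolding T_def by simp
  have bT: "b \<in> T" unfolding T_def by simp
  have xT: "x = of_nat N + (of_nat (cf b) * b + (\<Sum>a\<in>T-{b}. of_nat (cf a) * a))"
  proof -
    have "(\<Sum>a\<in>S. of_nat (cf a) * a) = (\<Sum>a\<in>T. of_nat (cf a) * a)"
      unfolding S_def by (rule sum_supp) (use fT in \<open>auto simp: T_def S_def\<close>)
    also have "\<dots> = of_nat (cf b) * b + (\<Sum>a\<in>T-{b}. of_nat (cf a) * a)"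
      using fT bT by (simp add: sum.remove)
    finally show ?thesis using xeq by simp
  qed
  show ?case
  proof (cases "d m = 1")
    case True
    have "b = of_nat (c m)" using g_mult[of m] True unfolding b_def by simp
    then have "x + s = of_nat (N + c m) + (\<Sum>a\<in>S. of_nat (cf a) * a)"
      using xeq s b_def by simp
    then show ?thesis using dec unfolding atomic_decomposition_def S_def by blast
  next
    case False
    then have d1: "1 < d m" using dpos[of m] by linarith
    have ab: "is_atom MM b" unfolding b_def by (rule gen_atom[OF d1])
    have denb: "den b = d m" unfolding b_def by (rule den_g)
    have vb: "cf b < d m" using bnd[OF ab] denb by simp
    show ?thesis
    proof (cases "cf b + 1 < d m")
      case True
      define cf' where "cf' = cf(b := cf b + 1)"
      have sup: "{a. cf' a \<noteq> 0} = T" unfolding cf'_def T_def S_def by auto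
      have "(\<Sum>a\<in>T. of_nat (cf' a) * a) = of_nat (cf' b) * b + (\<Sum>a\<in>T-{b}. of_nat (cf' a) * a)"
        using fT bT by (simp add: sum.remove)
      also have "(\<Sum>a\<in>T-{b}. of_nat (cf' a) * a) = (\<Sum>a\<in>T-{b}. of_nat (cf a) * a)"
        unfolding cf'_def by (rule sum.cong) auto
      finally have "x + s = of_nat N + (\<Sum>a\<in>{a. cf' a \<noteq> 0}. of_nat (cf' a) * a)"
        using xT s b_def sup unfolding cf'_def by (simp add: algebra_simps)
      moreover have "finite {a. cf' a \<noteq> 0}" using sup fT by simp
      moreover have "\<forall>a. cf' a \<noteq> 0 \<longrightarrow> is_atom MM a" using Sat ab unfolding cf'_def by auto
      moreover have "\<forall>a. is_atom MM a \<longrightarrow> cf' a < den a" using bnd True denb unfolding cf'_def by auto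
      ultimately show ?thesis unfolding atomic_decomposition_def by blast
    next
      case False
      then have v1: "cf b + 1 = d m" using vb by simp
      define cf' where "cf' = cf(b := 0)"
      have sup: "{a. cf' a \<noteq> 0} \<subseteq> T" unfolding cf'_def T_def S_def by auto
      have "(\<Sum>a\<in>{a. cf' a \<noteq> 0}. of_nat (cf' a) * a) = (\<Sum>a\<in>T. of_nat (cf' a) * a)"
        by (rule sum_supp[OF fT sup])
      also have "\<dots> = of_nat (cf' b) * b + (\<Sum>a\<in>T-{b}. of_nat (cf' a) * a)"
        using fT bT by (simp add: sum.remove)
      also have "(\<Sum>a\<in>T-{b}. of_nat (cf' a) * a) = (\<Sum>a\<in>T-{b}. of_nat (cf a) * a)"
        unfolding cf'_def by (rule sum.cong) auto
      finally have e1: "(\<Sum>a\<in>{a. cf' a \<noteq> 0}. of_nat (cf' a) * a) = (\<Sum>a\<in>T-{b}. of_nat (cf a) * a)"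
        unfolding cf'_def by simp
      have "of_nat (cf b) * b + b = of_nat (d m) * b" using v1
        by (metis add.commute mult.commute of_nat_Suc distrib_left mult.right_neutral Suc_eq_plus1)
      also have "\<dots> = of_nat (c m)" unfolding b_def by (rule g_mult)
      finally have "x + s = of_nat (N + c m) + (\<Sum>a\<in>{a. cf' a \<noteq> 0}. of_nat (cf' a) * a)"
        using xT s b_def e1 by (simp add: algebra_simps)
      moreover have "finite {a. cf' a \<noteq> 0}" using sup fT finite_subset by blast
      moreover have "\<forall>a. cf' a \<noteq> 0 \<longrightarrow> is_atom MM a" using Sat unfolding cf'_def by auto
      moreover have "\<forall>a. is_atom MM a \<longrightarrow> cf' a < den a" using bnd denb dpos[of m] unfolding cf'_def by auto
      ultimately show ?thesis unfolding atomic_decomposition_def by blast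
    qed
  qed
qed


lemma uniqueness:
  assumes D1: "atomic_decomposition MM x N cf" and D2: "atomic_decomposition MM x N' cf'"
  shows "cf = cf' \<and> N = N'"
proof -
  define S where "S = {a. cf a \<noteq> 0}"
  define S' where "S' = {a. cf' a \<noteq> 0}"
  have fS: "finite S" and Sat: "\<And>a. cf a \<noteq> 0 \<Longrightarrow> is_atom MM a"
    and bnd: "\<And>a. is_atom MM a \<Longrightarrow> cf a < den a"
    and xeq: "x = of_nat N + (\<Sum>a\<in>S. of_nat (cf a) * a)"
    using D1 unfolding atomic_decomposition_def S_def by auto
  have fS': "finite S'" and Sat': "\<And>a. cf' a \<noteq> 0 \<Longrightarrow> is_atom MM a"
    and bnd': "\<And>a. is_atom MM a \<Longrightarrow> cf' a < den a"
    and xeq': "x = of_nat N' + (\<Sum>a\<in>S'. of_nat (cf' a) * a)"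
    using D2 unfolding atomic_decomposition_def S'_def by auto
  have ceq: "cf a0 = cf' a0" for a0
  proof (cases "is_atom MM a0")
    case False
    then have "cf a0 = 0" "cf' a0 = 0" using Sat Sat' by blast+
    then show ?thesis by simp
  next
    case True
    then obtain m where a0: "a0 = g m" using atom_in by blast
    have dn: "den a0 = d m" using a0 den_g by simp
    define T where "T = insert a0 (S \<union> S')"
    have fT: "finite T" using fS fS' unfolding T_def by simp
    have aT: "a0 \<in> T" unfolding T_def by simp
    have s1: "(\<Sum>a\<in>S. of_nat (cf a) * a) = of_nat (cf a0) * a0 + (\<Sum>a\<in>T-{a0}. of_nat (cf a) * a)"
    proof -
      have "(\<Sum>a\<in>S. of_nat (cf a) * a) = (\<Sum>a\<in>T. of_nat (cf a) * a)"
        unfolding S_def by (rule sum_supp) (use fT in \<open>auto simp: T_def S_def\<close>)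
      then show ?thesis using fT aT by (simp add: sum.remove)
    qed
    have s2: "(\<Sum>a\<in>S'. of_nat (cf' a) * a) = of_nat (cf' a0) * a0 + (\<Sum>a\<in>T-{a0}. of_nat (cf' a) * a)"
    proof -
      have "(\<Sum>a\<in>S'. of_nat (cf' a) * a) = (\<Sum>a\<in>T. of_nat (cf' a) * a)"
        unfolding S'_def by (rule sum_supp) (use fT in \<open>auto simp: T_def S'_def\<close>)
      then show ?thesis using fT aT by (simp add: sum.remove)
    qed
    define e where "e = int (cf a0) - int (cf' a0)"
    define y where "y = of_int (int N - int N') + (\<Sum>a\<in>T-{a0}. of_int (int (cf a) - int (cf' a)) * a)"
    have ysum: "(\<Sum>a\<in>T-{a0}. of_int (int (cf a) - int (cf' a)) * a) =
        (\<Sum>a\<in>T-{a0}. of_nat (cf a) * a) - (\<Sum>a\<in>T-{a0}. of_nat (cf' a) * (a::rat))"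
      by (simp add: sum_subtractf[symmetric] algebra_simps)
    have eqn: "of_int e * a0 = - y"
      using xeq xeq' s1 s2 ysum unfolding e_def y_def by (simp add: algebra_simps)
    have "cpd (int (d m)) y" unfolding y_def
    proof (rule cpd_add[OF cpd_int cpd_sum[OF finite_Diff[OF fT]]])
      show "of_int (int N - int N') \<in> \<int>" by simp
    next
      fix a assume a: "a \<in> T - {a0}"
      show "cpd (int (d m)) (of_int (int (cf a) - int (cf' a)) * a)"
      proof (cases "cf a = 0 \<and> cf' a = 0")
        case True then show ?thesis by (simp add: cpd_int)
      next
        case False
        then have "is_atom MM a" using Sat Sat' by blast
        then obtain n where an: "a = g n" using atom_in by blast
        then have "n \<noteq> m" using a a0 by auto
        then have "cpd (int (d m)) (g n)" unfolding g_def
          by (intro cpd_gen) (use dpos cop in simp_all)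
        then show ?thesis using an cpd_mult_int by blast
      qed
    qed
    then have "cpd (int (d m)) (of_int (-1) * y)" by (rule cpd_mult_int)
    then have "cpd (int (d m)) (of_int e * (of_nat (c m) / of_nat (d m)))"
      using eqn a0 unfolding g_def by simp
    then have dv: "int (d m) dvd e" using cpd_dvd dpos ccop by blast
    have "cf a0 < d m" "cf' a0 < d m" using bnd[OF True] bnd'[OF True] dn by auto
    then have lt: "\<bar>e\<bar> < int (d m)" unfolding e_def by linarith
    have "e = 0"
    proof (rule ccontr)
      assume "e \<noteq> 0"
      then have "int (d m) \<le> \<bar>e\<bar>" using dv by (intro zdvd_imp_le) auto
      then show False using lt by simp
    qed
    then show ?thesis unfolding e_def by simp
  qed
  then have "cf = cf'" by auto
  then have "(of_nat N :: rat) = of_nat N'" using xeq xeq' unfolding S_def S'_def by simp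
  then show ?thesis using \<open>cf = cf'\<close> by simp
qed

end


theorem proposition4p3:
  fixes M :: "rat set"
  assumes "almost_reciprocal M"
  shows "unique_atomic_decomposition M"
proof -
  obtain c d :: "nat \<Rightarrow> nat" where
    h: "strict_mono d" "\<forall>n. 0 < d n" "\<forall>m n. m \<noteq> n \<longrightarrow> coprime (d m) (d n)"
       "\<forall>n. 0 < c n \<and> coprime (c n) (d n)"
       "M = gen_monoid (range (\<lambda>n. of_nat (c n) / of_nat (d n)))"
    using assms unfolding almost_reciprocal_def by blast
  interpret ar c d using h by unfold_locales auto
  have MM: "M = ar.MM c d"
    using h(5) by (simp add: g_def[abs_def])
  show ?thesis unfolding unique_atomic_decomposition_def
  proof
    fix x assume "x \<in> M"
    then obtain N cf where dec: "atomic_decomposition M x N cf" using existence MM by blast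
    show "\<exists>!p. atomic_decomposition M x (fst p) (snd p)"
    proof (rule ex1I[of _ "(N, cf)"])
      show "atomic_decomposition M x (fst (N, cf)) (snd (N, cf))" using dec by simp
    next
      fix p assume "atomic_decomposition M x (fst p) (snd p)"
      then have "snd p = cf \<and> fst p = N" using uniqueness dec MM by blast
      then show "p = (N, cf)" by (simp add: prod_eq_iff)
    qed
  qed
qed

end
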